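(* For every instance such that $|S_2|=2$ and $\pi_1+\pi_3+\pi_4-1=1$, we have $H^{PW''}\le \tfrac{360}{193}H^*$.
   Context: An instance consists of an integer $n\ge 1$ and growth rates $1=h(1)\ge h(2)\ge\cdots\ge h(n)>0$ of bamboos $b_1,\dots,b_n$. Bamboo Garden Trimming (discrete version): - All heights are $0$ initially. - On each day $t=1,2,\dots$ every bamboo $b_j$ grows by $h(j)$. - At the end of each day the gardener cuts exactly one bamboo $\sigma(t)\in\{1,\dots,n\}$ back to height $0$. The height of a schedule $\sigma:\mathbb{N}\to\{1,\dots,n\}$ is the supremum, over all days $t$ and all $j$, of the height of $b_j$ at the end of day $t$ just before the cut. $H^*$ denotes the infimum of this height over all schedules. Value of algorithm PW'': - Split $\{1,\dots,n\}$ into four sets: - $S_1=\{j: \tfrac23<h(j)\le 1\}$; - $S_2=\{j:\tfrac12<h(j)\le\tfrac23\}$; - $S_3=\{j: h(j)\le\tfrac12 \text{ and } \tfrac23 2^{-k}<h(j)\le 2^{-k}\text{ for some integer }k\ge1\}$; - $S_4=\{j: h(j)\le\tfrac12\text{ and } 2^{-(k+1)}<h(j)\le \tfrac23 2^{-k}\text{ for some integer }k\ge 1\}$. - Modified growths: $h''(j)=2^{-k}$ for $j\in S_3$ and $h''(j)=\tfrac23 2^{-k}$ for $j\in S_4$, with $k$ as in the definition of the set. - Let $\pi_1=|S_1|$, $sh_3=\sum_{j\in S_3}h''(j)$, $sh_4=\sum_{j\in S_4}h''(j)$, $\pi_3=\lfloor sh_3\rfloor$, $\pi_4=\lfloor sh_4\rfloor$,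 $f_3=sh_3-\pi_3$, $f_4=sh_4-\pi_4$. - Option (a): $\pi_R(a)=\lceil f_3+f_4\rceil$ and $z(a)=\pi_1+|S_2|+\pi_3+\pi_4+\pi_R(a)$. - Option (b): if $S_2=\emptyset$ put $z(b)=+\infty$. Otherwise let $h^*=\max_{j\in S_2}h(j)$ and $f_2=\tfrac12$ if $|S_2|$ is odd, $f_2=0$ if $|S_2|$ is even. Then $\pi_R(b)=\lceil f_2+f_3+f_4\rceil$ and $z(b)=2h^*\,(\pi_1+\lfloor |S_2|/2\rfloor+\pi_3+\pi_4+\pi_R(b))$. - The value returned by algorithm PW'' is $H^{PW''}=\min\{z(a),z(b)\}$. The paper takes this as the maximum height of the periodic pinwheel trimming schedule that it builds from these partitions. *)

theory Defs
  imports "HOL-Library.Extended_Real" Complex_Main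
begin

text \<open>An instance: n and growth rates h 1, ..., h n (values of h outside {1..n} are irrelevant).\<close>

definition valid_instance :: "nat \<Rightarrow> (nat \<Rightarrow> real) \<Rightarrow> bool" where
  "valid_instance n h \<longleftrightarrow> n \<ge> 1 \<and> h 1 = 1 \<and> (\<forall>j\<in>{1..<n}. h (Suc j) \<le> h j) \<and> h n > 0"

text \<open>Schedules: sigma t is the bamboo cut at the end of day t (t = 1, 2, ...).\<close>

definition valid_schedule :: "nat \<Rightarrow> (nat \<Rightarrow> nat) \<Rightarrow> bool" where
  "valid_schedule n \<sigma> \<longleftrightarrow> (\<forall>t\<ge>1. \<sigma> t \<in> {1..n})"

definition last_cut :: "(nat \<Rightarrow> nat) \<Rightarrow> nat \<Rightarrow> nat \<Rightarrow> nat" where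
  "last_cut \<sigma> j t = Max ({0} \<union> {s. 1 \<le> s \<and> s < t \<and> \<sigma> s = j})"

text \<open>Height of bamboo j at the end of day t, just before the cut.\<close>
definition bamboo_height :: "(nat \<Rightarrow> real) \<Rightarrow> (nat \<Rightarrow> nat) \<Rightarrow> nat \<Rightarrow> nat \<Rightarrow> real" where
  "bamboo_height h \<sigma> j t = h j * real (t - last_cut \<sigma> j t)"

definition schedule_height :: "nat \<Rightarrow> (nat \<Rightarrow> real) \<Rightarrow> (nat \<Rightarrow> nat) \<Rightarrow> ereal" where
  "schedule_height n h \<sigma> = (SUP t\<in>{1..}. SUP j\<in>{1..n}. ereal (bamboo_height h \<sigma> j t))"

definition H_star :: "nat \<Rightarrow> (nat \<Rightarrow> real) \<Rightarrow> ereal" where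
  "H_star n h = (INF \<sigma>\<in>{\<sigma>. valid_schedule n \<sigma>}. schedule_height n h \<sigma>)"

definition S1 :: "nat \<Rightarrow> (nat \<Rightarrow> real) \<Rightarrow> nat set" where
  "S1 n h = {j\<in>{1..n}. 2/3 < h j \<and> h j \<le> 1}"

definition S2 :: "nat \<Rightarrow> (nat \<Rightarrow> real) \<Rightarrow> nat set" where
  "S2 n h = {j\<in>{1..n}. 1/2 < h j \<and> h j \<le> 2/3}"

definition S3 :: "nat \<Rightarrow> (nat \<Rightarrow> real) \<Rightarrow> nat set" where
  "S3 n h = {j\<in>{1..n}. h j \<le> 1/2 \<and> (\<exists>k::nat. k \<ge> 1 \<and> 2/3 * (1/2)^k < h j \<and> h j \<le> (1/2)^k)}"

definition S4 :: "nat \<Rightarrow> (nat \<Rightarrow> real) \<Rightarrow> nat set" where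
  "S4 n h = {j\<in>{1..n}. h j \<le> 1/2 \<and> (\<exists>k::nat. k \<ge> 1 \<and> (1/2)^(k+1) < h j \<and> h j \<le> 2/3 * (1/2)^k)}"

definition h3'' :: "(nat \<Rightarrow> real) \<Rightarrow> nat \<Rightarrow> real" where
  "h3'' h j = (THE x. \<exists>k::nat. k \<ge> 1 \<and> 2/3 * (1/2)^k < h j \<and> h j \<le> (1/2)^k \<and> x = (1/2)^k)"

definition h4'' :: "(nat \<Rightarrow> real) \<Rightarrow> nat \<Rightarrow> real" where
  "h4'' h j = (THE x. \<exists>k::nat. k \<ge> 1 \<and> (1/2)^(k+1) < h j \<and> h j \<le> 2/3 * (1/2)^k \<and> x = 2/3 * (1/2)^k)"

definition pi1 :: "nat \<Rightarrow> (nat \<Rightarrow> real) \<Rightarrow> nat" where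
  "pi1 n h = card (S1 n h)"

definition sh3 :: "nat \<Rightarrow> (nat \<Rightarrow> real) \<Rightarrow> real" where
  "sh3 n h = (\<Sum>j\<in>S3 n h. h3'' h j)"

definition sh4 :: "nat \<Rightarrow> (nat \<Rightarrow> real) \<Rightarrow> real" where
  "sh4 n h = (\<Sum>j\<in>S4 n h. h4'' h j)"

definition pi3 :: "nat \<Rightarrow> (nat \<Rightarrow> real) \<Rightarrow> int" where
  "pi3 n h = \<lfloor>sh3 n h\<rfloor>"

definition pi4 :: "nat \<Rightarrow> (nat \<Rightarrow> real) \<Rightarrow> int" where
  "pi4 n h = \<lfloor>sh4 n h\<rfloor>"

definition f3 :: "nat \<Rightarrow> (nat \<Rightarrow> real) \<Rightarrow> real" where
  "f3 n h = sh3 n h - of_int (pi3 n h)"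

definition f4 :: "nat \<Rightarrow> (nat \<Rightarrow> real) \<Rightarrow> real" where
  "f4 n h = sh4 n h - of_int (pi4 n h)"

definition z_a :: "nat \<Rightarrow> (nat \<Rightarrow> real) \<Rightarrow> real" where
  "z_a n h = real (pi1 n h) + real (card (S2 n h)) + of_int (pi3 n h) + of_int (pi4 n h)
             + of_int \<lceil>f3 n h + f4 n h\<rceil>"

definition z_b :: "nat \<Rightarrow> (nat \<Rightarrow> real) \<Rightarrow> ereal" where
  "z_b n h = (if S2 n h = {} then \<infinity> else
     (let hs = Max (h ` S2 n h);
          f2 = (if odd (card (S2 n h)) then 1/2 else 0 :: real)
      in ereal (2 * hs * (real (pi1 n h) + real (card (S2 n h) div 2) + of_int (pi3 n h)
                 + of_int (pi4 n h) + of_int \<lceil>f2 + f3 n h + f4 n h\<rceil>))))"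

definition H_PW :: "nat \<Rightarrow> (nat \<Rightarrow> real) \<Rightarrow> ereal" where
  "H_PW n h = min (ereal (z_a n h)) (z_b n h)"

end

theory Submission
  imports Defs
begin


lemma h_range:
  assumes vi: "valid_instance n h" and j: "j \<in> {1..n}"
  shows "0 < h j \<and> h j \<le> 1"
proof -
  have mono: "\<And>d i. 1 \<le> i \<Longrightarrow> i + d \<le> n \<Longrightarrow> h (i + d) \<le> h i"
  proof -
    fix d i :: nat assume "1 \<le> i" "i + d \<le> n"
    then show "h (i + d) \<le> h i"
    proof (induction d)
      case 0 then show ?case by simp
    next
      case (Suc d)
      have "h (Suc (i + d)) \<le> h (i + d)" using vi Suc.prems unfolding valid_instance_def by auto
      then show ?case using Suc by simp
    qed
  qed
  have "h (1 + (j - 1)) \<le> h 1" using j by (intro mono) auto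
  moreover have "h (j + (n - j)) \<le> h j" using j by (intro mono) auto
  ultimately show ?thesis using vi j unfolding valid_instance_def by auto
qed

lemma window:
  assumes hb: "\<And>t j. t \<ge> 1 \<Longrightarrow> j \<in> {1..n} \<Longrightarrow> bamboo_height h \<sigma> j t \<le> H"
    and j: "j \<in> {1..n}" and hj: "h j > 0" and s: "s \<ge> 1"
  shows "\<exists>u. s \<le> u \<and> u < s + nat \<lfloor>H / h j\<rfloor> \<and> \<sigma> u = j"
proof -
  define g where "g = nat \<lfloor>H / h j\<rfloor>"
  define t where "t = s + g"
  define A where "A = {s. 1 \<le> s \<and> s < t \<and> \<sigma> s = j}"
  have finA: "finite A" unfolding A_def by (rule finite_subset[of _ "{..<t}"]) auto
  define lc where "lc = last_cut \<sigma> j t"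
  have lc: "lc = Max ({0} \<union> A)" unfolding lc_def last_cut_def A_def by simp
  have lcin: "lc \<in> {0} \<union> A" unfolding lc using finA by (intro Max_in) auto
  have "h j * real (t - lc) \<le> H" using hb[of t j] j s unfolding bamboo_height_def lc_def t_def by auto
  hence "real (t - lc) \<le> H / h j" using hj by (simp add: pos_le_divide_eq mult.commute)
  hence "t - lc \<le> g" unfolding g_def by (rule le_nat_floor)
  hence "lc \<ge> s" unfolding t_def using s by linarith
  hence "lc \<in> A" using lcin s by auto
  thus ?thesis unfolding A_def t_def g_def using \<open>lc \<ge> s\<close> by auto
qed

lemma count:
  assumes "\<And>s. s \<ge> 1 \<Longrightarrow> \<exists>u. s \<le> u \<and> u < s + g \<and> \<sigma> u = j"
  shows "m \<le> card {u\<in>{1..m*g}. \<sigma> u = j}"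
proof (induction m)
  case 0 show ?case by simp
next
  case (Suc m)
  obtain u where u: "m*g+1 \<le> u" "u < m*g+1+g" "\<sigma> u = j" using assms[of "m*g+1"] by auto
  have sub: "insert u {u\<in>{1..m*g}. \<sigma> u = j} \<subseteq> {u\<in>{1..Suc m*g}. \<sigma> u = j}" using u by auto
  have "u \<notin> {u\<in>{1..m*g}. \<sigma> u = j}" using u by auto
  hence "card (insert u {u\<in>{1..m*g}. \<sigma> u = j}) = Suc (card {u\<in>{1..m*g}. \<sigma> u = j})" by simp
  moreover have "card (insert u {u\<in>{1..m*g}. \<sigma> u = j}) \<le> card {u\<in>{1..Suc m*g}. \<sigma> u = j}"
    by (rule card_mono[OF _ sub]) auto
  ultimately show ?case using Suc.IH by linarith
qed

lemma density:
  assumes vi: "valid_instance n h"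
    and hb: "\<And>t j. t \<ge> 1 \<Longrightarrow> j \<in> {1..n} \<Longrightarrow> bamboo_height h \<sigma> j t \<le> H"
  shows "(\<Sum>j\<in>{1..n}. 1 / real (nat \<lfloor>H / h j\<rfloor>)) \<le> 1"
    and "\<And>j. j\<in>{1..n} \<Longrightarrow> nat \<lfloor>H / h j\<rfloor> \<ge> 1"
proof -
  define g where "g j = nat \<lfloor>H / h j\<rfloor>" for j
  have win: "\<And>j s. j \<in> {1..n} \<Longrightarrow> s \<ge> 1 \<Longrightarrow> \<exists>u. s \<le> u \<and> u < s + g j \<and> \<sigma> u = j"
    unfolding g_def using window[OF hb] h_range[OF vi] by blast
  have g1: "g j \<ge> 1" if "j \<in> {1..n}" for j using win[OF that, of 1] by auto
  thus "\<And>j. j\<in>{1..n} \<Longrightarrow> nat \<lfloor>H / h j\<rfloor> \<ge> 1" unfolding g_def by auto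
  define T where "T = (\<Prod>j\<in>{1..n}. g j)"
  have Tpos: "T > 0" unfolding T_def
  proof (intro prod_pos ballI)
    fix a assume "a \<in> {1..n}" then show "0 < g a" using g1[of a] by simp
  qed
  have dv: "g j dvd T" if "j \<in> {1..n}" for j unfolding T_def using that by (intro dvd_prodI) auto
  have cnt: "T div g j \<le> card {u\<in>{1..T}. \<sigma> u = j}" if "j \<in> {1..n}" for j
  proof -
    have e: "(T div g j) * g j = T" using dv[OF that] by simp
    have "T div g j \<le> card {u\<in>{1..(T div g j)*g j}. \<sigma> u = j}"
      by (rule count) (rule win[OF that])
    thus ?thesis using e by simp
  qed
  have "(\<Sum>j\<in>{1..n}. card {u\<in>{1..T}. \<sigma> u = j}) = card (\<Union>j\<in>{1..n}. {u\<in>{1..T}. \<sigma> u = j})"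
    by (rule card_UN_disjoint[symmetric]) auto
  also have "\<dots> \<le> card {1..T}" by (rule card_mono) auto
  also have "\<dots> = T" by simp
  finally have c1: "(\<Sum>j\<in>{1..n}. card {u\<in>{1..T}. \<sigma> u = j}) \<le> T" .
  have "(\<Sum>j\<in>{1..n}. T div g j) \<le> (\<Sum>j\<in>{1..n}. card {u\<in>{1..T}. \<sigma> u = j})"
    by (rule sum_mono) (rule cnt)
  with c1 have c2: "(\<Sum>j\<in>{1..n}. T div g j) \<le> T" by linarith
  have "(\<Sum>j\<in>{1..n}. real T / real (g j)) = (\<Sum>j\<in>{1..n}. real (T div g j))"
    by (rule sum.cong) (auto simp: real_of_nat_div dv)
  also have "\<dots> = real (\<Sum>j\<in>{1..n}. T div g j)" by simp
  also have "\<dots> \<le> real T" using c2 by linarith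
  finally have "(\<Sum>j\<in>{1..n}. real T / real (g j)) \<le> real T" .
  moreover have "(\<Sum>j\<in>{1..n}. real T / real (g j)) = real T * (\<Sum>j\<in>{1..n}. 1 / real (g j))"
    by (simp add: sum_distrib_left)
  ultimately have "real T * (\<Sum>j\<in>{1..n}. 1 / real (g j)) \<le> real T * 1" by simp
  hence "(\<Sum>j\<in>{1..n}. 1 / real (g j)) \<le> 1"
    using Tpos by (simp add: mult_le_cancel_left_pos)
  thus "(\<Sum>j\<in>{1..n}. 1 / real (nat \<lfloor>H / h j\<rfloor>)) \<le> 1" unfolding g_def .
qed



lemma h3_bound:
  assumes "j \<in> S3 n h" shows "h3'' h j \<le> 3/2 * h j"
proof -
  from assms obtain k where k: "k\<ge>1" "2/3*(1/2::real)^k < h j" "h j \<le> (1/2::real)^k"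
    unfolding S3_def by auto
  have "h3'' h j = (1/2)^k" unfolding h3''_def
  proof (rule the_equality)
    show "\<exists>k'. k' \<ge> 1 \<and> 2/3*(1/2::real)^k' < h j \<and> h j \<le> (1/2)^k' \<and> (1/2::real)^k = (1/2)^k'"
      using k by auto
  next
    fix x assume "\<exists>k'. k' \<ge> 1 \<and> 2/3*(1/2::real)^k' < h j \<and> h j \<le> (1/2)^k' \<and> x = (1/2)^k'"
    then obtain k' where k': "2/3*(1/2::real)^k' < h j" "h j \<le> (1/2)^k'" "x = (1/2)^k'" by auto
    have "k' = k"
    proof (rule ccontr)
      assume "k' \<noteq> k"
      then consider "k < k'" | "k' < k" by linarith
      then show False
      proof cases
        case 1
        hence "(1/2::real)^k' \<le> (1/2)^(Suc k)" by (intro power_decreasing) auto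
        thus False using k k' by simp
      next
        case 2
        hence "(1/2::real)^k \<le> (1/2)^(Suc k')" by (intro power_decreasing) auto
        thus False using k k' by simp
      qed
    qed
    thus "x = (1/2)^k" using k' by simp
  qed
  thus ?thesis using k by simp
qed

lemma h4_bound:
  assumes "j \<in> S4 n h" shows "h4'' h j \<le> 3/2 * h j"
proof -
  from assms obtain k where k: "k\<ge>1" "(1/2::real)^(k+1) < h j" "h j \<le> 2/3*(1/2::real)^k"
    unfolding S4_def by auto
  have "h4'' h j = 2/3*(1/2)^k" unfolding h4''_def
  proof (rule the_equality)
    show "\<exists>k'. k' \<ge> 1 \<and> (1/2::real)^(k'+1) < h j \<and> h j \<le> 2/3*(1/2)^k' \<and> 2/3*(1/2::real)^k = 2/3*(1/2)^k'"
      using k by auto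
  next
    fix x assume "\<exists>k'. k' \<ge> 1 \<and> (1/2::real)^(k'+1) < h j \<and> h j \<le> 2/3*(1/2)^k' \<and> x = 2/3*(1/2)^k'"
    then obtain k' where k': "(1/2::real)^(k'+1) < h j" "h j \<le> 2/3*(1/2)^k'" "x = 2/3*(1/2)^k'" by auto
    have "k' = k"
    proof (rule ccontr)
      assume "k' \<noteq> k"
      then consider "k < k'" | "k' < k" by linarith
      then show False
      proof cases
        case 1
        hence "(1/2::real)^k' \<le> (1/2)^(Suc k)" by (intro power_decreasing) auto
        thus False using k k' by simp
      next
        case 2
        hence "(1/2::real)^k \<le> (1/2)^(Suc k')" by (intro power_decreasing) auto
        thus False using k k' by simp
      qed
    qed
    thus "x = 2/3*(1/2)^k" using k' by simp
  qed
  thus ?thesis using k by simp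
qed

lemma S34_disj: "S3 n h \<inter> S4 n h = {}"
proof (rule ccontr)
  assume "S3 n h \<inter> S4 n h \<noteq> {}"
  then obtain j k k' where k: "2/3*(1/2::real)^k < h j" "h j \<le> (1/2)^k"
    and k': "(1/2::real)^(k'+1) < h j" "h j \<le> 2/3*(1/2)^k'"
    unfolding S3_def S4_def by blast
  consider "k < k'" | "k' < k" | "k = k'" by linarith
  then show False
  proof cases
    case 1
    hence "(1/2::real)^k' \<le> (1/2)^(Suc k)" by (intro power_decreasing) auto
    thus False using k k' by simp
  next
    case 2
    hence "(1/2::real)^k \<le> (1/2)^(Suc k')" by (intro power_decreasing) auto
    thus False using k k' by simp
  next
    case 3 thus False using k k' by simp
  qed
qed

lemma split_sum:
  assumes F: "\<And>j. j \<in> {1..n} \<Longrightarrow> F j \<ge> (0::real)" and "1 \<in> S1 n h"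
  shows "F 1 + (\<Sum>j\<in>S2 n h. F j) + ((\<Sum>j\<in>S1 n h - {1}. F j) + (\<Sum>j\<in>S3 n h. F j) + (\<Sum>j\<in>S4 n h. F j))
         \<le> (\<Sum>j\<in>{1..n}. F j)"
proof -
  have fin: "finite (S1 n h)" "finite (S2 n h)" "finite (S3 n h)" "finite (S4 n h)"
    unfolding S1_def S2_def S3_def S4_def by auto
  let ?U = "{1} \<union> S2 n h \<union> ((S1 n h - {1}) \<union> S3 n h \<union> S4 n h)"
  have d34: "S3 n h \<inter> S4 n h = {}" by (rule S34_disj)
  have d1: "(S1 n h - {1}) \<inter> S3 n h = {}" "(S1 n h - {1} \<union> S3 n h) \<inter> S4 n h = {}"
    using d34 by (auto simp: S1_def S3_def S4_def)
  have d2: "S2 n h \<inter> (S1 n h - {1} \<union> S3 n h \<union> S4 n h) = {}"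
    by (auto simp: S1_def S2_def S3_def S4_def)
  have d3: "{1} \<inter> (S2 n h \<union> (S1 n h - {1} \<union> S3 n h \<union> S4 n h)) = {}"
    using assms(2) by (auto simp: S1_def S2_def S3_def S4_def)
  have "(\<Sum>j\<in>?U. F j) = (\<Sum>j\<in>{1} \<union> (S2 n h \<union> (S1 n h - {1} \<union> S3 n h \<union> S4 n h)). F j)"
    by (simp add: Un_assoc)
  also have "\<dots> = F 1 + (\<Sum>j\<in>S2 n h \<union> (S1 n h - {1} \<union> S3 n h \<union> S4 n h). F j)"
    using fin d3 by (subst sum.union_disjoint) auto
  also have "(\<Sum>j\<in>S2 n h \<union> (S1 n h - {1} \<union> S3 n h \<union> S4 n h). F j)
     = (\<Sum>j\<in>S2 n h. F j) + (\<Sum>j\<in>S1 n h - {1} \<union> S3 n h \<union> S4 n h. F j)"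
    using fin d2 by (subst sum.union_disjoint) auto
  also have "(\<Sum>j\<in>S1 n h - {1} \<union> S3 n h \<union> S4 n h. F j)
     = (\<Sum>j\<in>S1 n h - {1} \<union> S3 n h. F j) + (\<Sum>j\<in>S4 n h. F j)"
    using fin d1 by (subst sum.union_disjoint) auto
  also have "(\<Sum>j\<in>S1 n h - {1} \<union> S3 n h. F j) = (\<Sum>j\<in>S1 n h - {1}. F j) + (\<Sum>j\<in>S3 n h. F j)"
    using fin d1 by (subst sum.union_disjoint) auto
  finally have "(\<Sum>j\<in>?U. F j) = F 1 + (\<Sum>j\<in>S2 n h. F j) + ((\<Sum>j\<in>S1 n h - {1}. F j) + (\<Sum>j\<in>S3 n h. F j) + (\<Sum>j\<in>S4 n h. F j))"
    by simp
  moreover have "(\<Sum>j\<in>?U. F j) \<le> (\<Sum>j\<in>{1..n}. F j)"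
    by (rule sum_mono2) (use assms in \<open>auto simp: S1_def S2_def S3_def S4_def\<close>)
  ultimately show ?thesis by simp
qed



lemma inv_ge:
  fixes k m :: nat assumes "1 \<le> k" "k \<le> m" shows "1/real m \<le> 1/real k"
  using assms by (intro divide_left_mono) auto

lemma main_bound:
  assumes vi: "valid_instance n h"
    and c2: "card (S2 n h) = 2"
    and pis: "int (pi1 n h) + pi3 n h + pi4 n h - 1 = 1"
    and hb: "\<And>t j. t \<ge> 1 \<Longrightarrow> j \<in> {1..n} \<Longrightarrow> bamboo_height h \<sigma> j t \<le> H"
  shows "z_a n h \<le> 360/193 * H"
proof -
  define w where "w j = 1 / real (nat \<lfloor>H / h j\<rfloor>)" for j
  have dens: "(\<Sum>j\<in>{1..n}. w j) \<le> 1" unfolding w_def by (rule density(1)[OF vi hb])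
  have g1: "nat \<lfloor>H / h j\<rfloor> \<ge> 1" if "j \<in> {1..n}" for j by (rule density(2)[OF vi hb that])
  have hr: "0 < h j \<and> h j \<le> 1" if "j \<in> {1..n}" for j by (rule h_range[OF vi that])
  have n1: "1 \<in> {1..n}" and h1: "h 1 = 1" using vi unfolding valid_instance_def by auto
  have one_S1: "1 \<in> S1 n h" using n1 h1 unfolding S1_def by auto
  have "1 \<le> nat \<lfloor>H\<rfloor>" using g1[OF n1] h1 by simp
  hence "1 \<le> \<lfloor>H\<rfloor>" by linarith
  hence H1: "H \<ge> 1" by linarith
  have wnn: "w j \<ge> 0" for j unfolding w_def by simp
  have wge: "w j \<ge> h j / H" if j: "j \<in> {1..n}" for j
  proof -
    have gp: "real (nat \<lfloor>H / h j\<rfloor>) \<ge> 1" using g1[OF j] by simp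
    have "real (nat \<lfloor>H / h j\<rfloor>) \<le> H / h j"
      using hr[OF j] H1 by (simp add: of_nat_floor)
    moreover have "0 < H / h j * real (nat \<lfloor>H / h j\<rfloor>)"
      using gp hr[OF j] H1 by (intro mult_pos_pos) auto
    ultimately have "1 / (H / h j) \<le> 1 / real (nat \<lfloor>H / h j\<rfloor>)"
      by (intro divide_left_mono) auto
    thus ?thesis unfolding w_def using hr[OF j] H1 by simp
  qed
  have finS: "finite (S1 n h)" "finite (S2 n h)" "finite (S3 n h)" "finite (S4 n h)"
    unfolding S1_def S2_def S3_def S4_def by auto
  have S1b: "(\<Sum>j\<in>S1 n h - {1}. h j) \<ge> 2/3 * (real (pi1 n h) - 1)"
  proof -
    have "(\<Sum>j\<in>S1 n h - {1}. (2/3::real)) \<le> (\<Sum>j\<in>S1 n h - {1}. h j)"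
      by (rule sum_mono) (auto simp: S1_def)
    moreover have "card (S1 n h - {1}) = pi1 n h - 1" unfolding pi1_def using one_S1 finS by simp
    moreover have "pi1 n h \<ge> 1" unfolding pi1_def using one_S1 finS
      by (metis One_nat_def Suc_leI card_gt_0_iff empty_iff)
    ultimately show ?thesis by (simp add: of_nat_diff)
  qed
  have S2b: "(\<Sum>j\<in>S2 n h. h j) \<ge> 1"
  proof -
    have "(\<Sum>j\<in>S2 n h. (1/2::real)) \<le> (\<Sum>j\<in>S2 n h. h j)"
      by (rule sum_mono) (auto simp: S2_def)
    thus ?thesis using c2 by simp
  qed
  have S3b: "(\<Sum>j\<in>S3 n h. h j) \<ge> 2/3 * sh3 n h"
  proof -
    have "(\<Sum>j\<in>S3 n h. 2/3 * h3'' h j) \<le> (\<Sum>j\<in>S3 n h. h j)"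
      by (rule sum_mono) (use h3_bound in fastforce)
    thus ?thesis unfolding sh3_def by (simp add: sum_distrib_left)
  qed
  have S4b: "(\<Sum>j\<in>S4 n h. h j) \<ge> 2/3 * sh4 n h"
  proof -
    have "(\<Sum>j\<in>S4 n h. 2/3 * h4'' h j) \<le> (\<Sum>j\<in>S4 n h. h j)"
      by (rule sum_mono) (use h4_bound in fastforce)
    thus ?thesis unfolding sh4_def by (simp add: sum_distrib_left)
  qed
  define f where "f = f3 n h + f4 n h"
  have f3r: "0 \<le> f3 n h" "f3 n h < 1" unfolding f3_def pi3_def by linarith+
  have f4r: "0 \<le> f4 n h" "f4 n h < 1" unfolding f4_def pi4_def by linarith+
  have key: "real (pi1 n h) - 1 + sh3 n h + sh4 n h = 1 + f"
  proof -
    have "real_of_int (int (pi1 n h) + pi3 n h + pi4 n h) = 2" using pis by simp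
    thus ?thesis unfolding f_def f3_def f4_def by simp
  qed
  define RS where "RS = (\<Sum>j\<in>S1 n h - {1}. h j) + (\<Sum>j\<in>S3 n h. h j) + (\<Sum>j\<in>S4 n h. h j)"
  have e: "2/3 + 2/3*f = 2/3*(real (pi1 n h) - 1) + 2/3*sh3 n h + 2/3*sh4 n h"
  proof -
    have ff: "f = real (pi1 n h) - 2 + sh3 n h + sh4 n h" using key by linarith
    show ?thesis unfolding ff by (simp add: field_simps)
  qed
  have RSb: "RS \<ge> 2/3 + 2/3 * f" unfolding RS_def using S1b S3b S4b e by linarith
  have "(\<Sum>j\<in>{1..n}. h j / H) \<le> 1" using dens wge by (meson order_trans sum_mono)
  hence sumh: "(\<Sum>j\<in>{1..n}. h j) \<le> H" using H1 by (simp add: sum_divide_distrib[symmetric])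
  have "h 1 + (\<Sum>j\<in>S2 n h. h j) + RS \<le> (\<Sum>j\<in>{1..n}. h j)"
    unfolding RS_def by (rule split_sum[OF _ one_S1]) (use hr in fastforce)
  hence Hsum: "H \<ge> 8/3 + 2/3 * f" using sumh S2b RSb h1 by linarith
  have H3: "H \<ge> 3"
  proof (rule ccontr)
    assume "\<not> H \<ge> 3" hence H3: "H < 3" by simp
    have "w 1 + (\<Sum>j\<in>S2 n h. w j) + ((\<Sum>j\<in>S1 n h - {1}. w j) + (\<Sum>j\<in>S3 n h. w j) + (\<Sum>j\<in>S4 n h. w j))
         \<le> (\<Sum>j\<in>{1..n}. w j)" by (rule split_sum[OF _ one_S1]) (rule wnn)
    hence tot: "w 1 + (\<Sum>j\<in>S2 n h. w j) + ((\<Sum>j\<in>S1 n h - {1}. w j) + (\<Sum>j\<in>S3 n h. w j) + (\<Sum>j\<in>S4 n h. w j)) \<le> 1"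
      using dens by linarith
    have w1: "w 1 \<ge> 1/2"
    proof -
      have "\<lfloor>H / h 1\<rfloor> \<le> 2" using H3 h1 by (simp add: floor_le_iff)
      hence "nat \<lfloor>H / h 1\<rfloor> \<le> 2" by (simp add: nat_le_iff)
      moreover have "nat \<lfloor>H / h 1\<rfloor> \<ge> 1" using g1[OF n1] .
      ultimately show ?thesis unfolding w_def using inv_ge[of "nat \<lfloor>H / h 1\<rfloor>" 2] by simp
    qed
    have w2: "w j \<ge> 1/5" if j: "j \<in> S2 n h" for j
    proof -
      have jn: "j \<in> {1..n}" and hj: "h j > 1/2" using j unfolding S2_def by auto
      have "H / h j < 6"
        using hj H3 by (simp add: divide_less_eq)
      hence "\<lfloor>H / h j\<rfloor> \<le> 5" by (simp add: floor_le_iff)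
      hence "nat \<lfloor>H / h j\<rfloor> \<le> 5" by (simp add: nat_le_iff)
      moreover have "nat \<lfloor>H / h j\<rfloor> \<ge> 1" using g1[OF jn] .
      ultimately show ?thesis unfolding w_def using inv_ge[of "nat \<lfloor>H / h j\<rfloor>" 5] by simp
    qed
    have "(\<Sum>j\<in>S2 n h. (1/5::real)) \<le> (\<Sum>j\<in>S2 n h. w j)" by (rule sum_mono) (rule w2)
    hence W2: "(\<Sum>j\<in>S2 n h. w j) \<ge> 2/5" using c2 by simp
    have sub: "S1 n h - {1} \<subseteq> {1..n}" "S3 n h \<subseteq> {1..n}" "S4 n h \<subseteq> {1..n}"
      unfolding S1_def S3_def S4_def by auto
    have "(\<Sum>j\<in>S1 n h - {1}. h j / H) \<le> (\<Sum>j\<in>S1 n h - {1}. w j)"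
      by (rule sum_mono) (use wge sub in blast)
    moreover have "(\<Sum>j\<in>S3 n h. h j / H) \<le> (\<Sum>j\<in>S3 n h. w j)"
      by (rule sum_mono) (use wge sub in blast)
    moreover have "(\<Sum>j\<in>S4 n h. h j / H) \<le> (\<Sum>j\<in>S4 n h. w j)"
      by (rule sum_mono) (use wge sub in blast)
    moreover have "RS / H = (\<Sum>j\<in>S1 n h - {1}. h j / H) + (\<Sum>j\<in>S3 n h. h j / H) + (\<Sum>j\<in>S4 n h. h j / H)"
      unfolding RS_def by (simp add: sum_divide_distrib add_divide_distrib)
    ultimately have "RS / H \<le> 1/10" using tot w1 W2 by linarith
    hence "RS \<le> H / 10" using H1 by (simp add: divide_le_eq)
    moreover have "f \<ge> 0" using f3r f4r unfolding f_def by linarith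
    hence "RS \<ge> 2/3" using RSb by linarith
    ultimately show False using H3 by linarith
  qed
  have za: "z_a n h = 4 + of_int \<lceil>f\<rceil>"
  proof -
    have "real_of_int (int (pi1 n h) + pi3 n h + pi4 n h) = 2" using pis by simp
    thus ?thesis unfolding z_a_def f_def using c2 by simp
  qed
  show ?thesis
  proof (cases "f \<le> 1")
    case True
    hence "\<lceil>f\<rceil> \<le> 1" by linarith
    hence "z_a n h \<le> 5" using za by simp
    thus ?thesis using H3 by linarith
  next
    case False
    have "f < 2" using f3r f4r unfolding f_def by linarith
    hence "\<lceil>f\<rceil> \<le> 2" by linarith
    hence "z_a n h \<le> 6" using za by simp
    moreover have "H \<ge> 10/3" using Hsum False by linarith
    ultimately show ?thesis by linarith
  qed
qed



lemma height_le_sched: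
  assumes "t \<ge> 1" "j \<in> {1..n}"
  shows "ereal (bamboo_height h \<sigma> j t) \<le> schedule_height n h \<sigma>"
  unfolding schedule_height_def
  by (rule SUP_upper2[of t]) (use assms in \<open>auto intro: SUP_upper\<close>)

theorem proposition5:
  fixes n :: nat and h :: "nat \<Rightarrow> real"
  assumes "valid_instance n h"
    and "card (S2 n h) = 2"
    and "int (pi1 n h) + pi3 n h + pi4 n h - 1 = 1"
  shows "H_PW n h \<le> ereal (360/193) * H_star n h"
proof -
  define c where "c = z_a n h * 193/360"
  have n1: "1 \<in> {1..n}" using assms(1) unfolding valid_instance_def by auto
  have sched: "ereal c \<le> schedule_height n h \<sigma>" for \<sigma>
  proof (cases "schedule_height n h \<sigma>")
    case (real H)
    have hb: "bamboo_height h \<sigma> j t \<le> H" if "t \<ge> 1" "j \<in> {1..n}" for t j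
      using height_le_sched[OF that, of h \<sigma>] real by simp
    have "z_a n h \<le> 360/193 * H" by (rule main_bound[OF assms hb])
    thus ?thesis using real unfolding c_def by simp
  next
    case PInf thus ?thesis by simp
  next
    case MInf
    thus ?thesis using height_le_sched[OF _ n1, of 1 h \<sigma>] by simp
  qed
  have "ereal c \<le> H_star n h" unfolding H_star_def by (rule INF_greatest) (rule sched)
  hence "ereal (360/193) * ereal c \<le> ereal (360/193) * H_star n h"
    by (rule ereal_mult_left_mono) simp
  moreover have "ereal (360/193) * ereal c = ereal (z_a n h)" unfolding c_def by simp
  moreover have "H_PW n h \<le> ereal (z_a n h)" unfolding H_PW_def by simp
  ultimately show ?thesis by simp
qed


end
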